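(* Let $w_1,\dots,w_r\in\mathbb{R}^N$ be pairwise distinct points and let $f(x)=\sum_{k=1}^r\log|x-w_k|^2$, viewed as a function $\mathbb{R}^N\to\mathbb{R}\cup\{-\infty\}$ (with $f(w_k)=-\infty$). (1) Let $\Omega\subset\mathbb{R}^N$ be a bounded domain with $w_k\notin\partial\Omega$ for all $k$. Then every point of $\bar\Omega$ at which $f|_{\bar\Omega}$ attains its maximum lies in $\partial\Omega$. (2) Suppose moreover that the convex hull $\mathrm{Conv}(\{w_1,\dots,w_r\})$ has nonempty interior and $\bar\Omega=\mathrm{Conv}(\{w_1,\dots,w_r\})$. Then no point at which $f|_{\bar\Omega}$ attains its maximum lies in the relative interior of a face of the polytope $\bar\Omega$ of dimension at least $2$; equivalently, all maximum points lie on one-dimensional faces (edges) of $\bar\Omega$.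
   Context: $|\cdot|$ is the Euclidean norm on $\mathbb{R}^N$. *)

theory Defs
  imports "HOL-Analysis.Analysis"
begin

definition logpot :: "'a::euclidean_space set \<Rightarrow> 'a \<Rightarrow> ereal" where
  "logpot W x = (if x \<in> W then -\<infinity> else ereal (\<Sum>w\<in>W. ln ((norm (x - w))\<^sup>2)))"

definition is_max_point :: "('a \<Rightarrow> ereal) \<Rightarrow> 'a set \<Rightarrow> 'a \<Rightarrow> bool" where
  "is_max_point g S x \<longleftrightarrow> x \<in> S \<and> (\<forall>y\<in>S. g y \<le> g x)"

definition bounded_domain :: "'a::euclidean_space set \<Rightarrow> bool" where
  "bounded_domain \<Omega> \<longleftrightarrow> \<Omega> \<noteq> {} \<and> open \<Omega> \<and> connected \<Omega> \<and> bounded \<Omega>"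

end

theory Submission imports Defs "HOL-Complex_Analysis.Complex_Analysis" begin

definition Fpot :: "'a::euclidean_space set \<Rightarrow> 'a \<Rightarrow> real" where
  "Fpot W y = (\<Sum>w\<in>W. ln ((norm (y - w))^2))"

lemma logpot_notin: "y \<notin> W \<Longrightarrow> logpot W y = ereal (Fpot W y)"
  by (simp add: logpot_def Fpot_def)

lemma norm_two_sq:
  fixes u1 u2 :: "'a::euclidean_space"
  assumes "norm u1 = 1" "norm u2 = 1" "inner u1 u2 = 0"
  shows "(norm (a *\<^sub>R u1 + b *\<^sub>R u2))^2 = a^2 + b^2"
proof -
  have "inner u1 u1 = 1" "inner u2 u2 = 1" using assms by (simp_all add: power2_norm_eq_inner[symmetric])
  then show ?thesis using assms(3)
    by (simp only: power2_norm_eq_inner) (simp add: inner_add_left inner_add_right inner_commute power2_eq_square)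
qed

lemma planar:
  fixes W :: "'a::euclidean_space set"
  assumes finW: "finite W" and neW: "W \<noteq> {}" and xW: "x \<notin> W"
    and u: "norm u1 = 1" "norm u2 = 1" "inner u1 u2 = 0"
    and dec: "\<And>w. w \<in> W \<Longrightarrow> w - x = inner u1 (w - x) *\<^sub>R u1 + inner u2 (w - x) *\<^sub>R u2"
    and r: "r > 0"
    and inT: "\<And>a b. a^2 + b^2 < r^2 \<Longrightarrow> x + a *\<^sub>R u1 + b *\<^sub>R u2 \<in> T"
  shows "\<exists>y\<in>T. logpot W x < logpot W y"
proof (rule ccontr)
  assume "\<not> ?thesis"
  then have H: "\<And>y. y \<in> T \<Longrightarrow> logpot W y \<le> logpot W x" by (auto simp: not_less)
  define c where "c w = Complex (inner u1 (w - x)) (inner u2 (w - x))" for w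
  define \<phi> where "\<phi> z = x + Re z *\<^sub>R u1 + Im z *\<^sub>R u2" for z
  define P where "P z = (\<Prod>w\<in>W. z - c w)" for z
  have nrm: "(norm (\<phi> z - w))^2 = (cmod (z - c w))^2" if "w \<in> W" for w z
  proof -
    have "\<phi> z - w = (Re z - inner u1 (w - x)) *\<^sub>R u1 + (Im z - inner u2 (w - x)) *\<^sub>R u2"
      using dec[OF that] unfolding \<phi>_def by (simp add: algebra_simps)
    then show ?thesis using norm_two_sq[OF u] by (simp add: cmod_power2 c_def)
  qed
  have cne: "c w \<noteq> 0" if "w \<in> W" for w
  proof
    assume "c w = 0"
    then have "w - x = 0" using dec[OF that] by (simp add: c_def Complex_eq_0)
    then show False using xW that by simp
  qed
  have P0: "P 0 \<noteq> 0" using finW cne by (auto simp: P_def)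
  have Fp: "Fpot W (\<phi> z) = ln ((cmod (P z))^2)" if "P z \<noteq> 0" for z
  proof -
    have nz: "z - c w \<noteq> 0" if "w \<in> W" for w using \<open>P z \<noteq> 0\<close> finW that by (auto simp: P_def)
    have "Fpot W (\<phi> z) = (\<Sum>w\<in>W. ln ((cmod (z - c w))^2))"
      unfolding Fpot_def by (intro sum.cong refl) (simp add: nrm)
    also have "\<dots> = ln (\<Prod>w\<in>W. (cmod (z - c w))^2)"
      using finW nz by (simp add: ln_prod)
    also have "\<dots> = ln ((cmod (P z))^2)"
      by (simp add: P_def prod_norm[symmetric] prod_power_distrib)
    finally show ?thesis .
  qed
  have phiW: "\<phi> z \<notin> W" if "P z \<noteq> 0" for z
  proof
    assume "\<phi> z \<in> W"
    then have "(cmod (z - c (\<phi> z)))^2 = 0" using nrm[of "\<phi> z" z] by simp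
    then have "P z = 0" using \<open>\<phi> z \<in> W\<close> finW by (auto simp: P_def)
    then show False using that by simp
  qed
  have phi0: "\<phi> 0 = x" by (simp add: \<phi>_def)
  have bound: "cmod (P z) \<le> cmod (P 0)" if "z \<in> ball 0 r" for z
  proof (cases "P z = 0")
    case True then show ?thesis by simp
  next
    case False
    have "(Re z)^2 + (Im z)^2 < r^2"
      using that r by (simp add: cmod_power2[symmetric] power_strict_mono)
    then have "\<phi> z \<in> T" using inT by (simp add: \<phi>_def)
    then have "logpot W (\<phi> z) \<le> logpot W x" by (rule H)
    then have "Fpot W (\<phi> z) \<le> Fpot W (\<phi> 0)"
      using phiW[OF False] xW phi0 by (simp add: logpot_notin)
    then have "ln ((cmod (P z))^2) \<le> ln ((cmod (P 0))^2)" using Fp False P0 by simp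
    then have "(cmod (P z))^2 \<le> (cmod (P 0))^2" using False P0 by simp
    then show ?thesis by (simp add: power2_le_iff_abs_le)
  qed
  have "P holomorphic_on UNIV" unfolding P_def by (intro holomorphic_intros)
  then have "P constant_on UNIV"
    by (rule maximum_modulus_principle[where U = "ball 0 r" and \<xi> = 0]) (use r bound in auto)
  then obtain k where k: "\<And>z. P z = k" by (auto simp: constant_on_def)
  obtain w0 where "w0 \<in> W" using neW by auto
  then have "P (c w0) = 0" using finW by (auto simp: P_def)
  then show False using k[of 0] k[of "c w0"] P0 by simp
qed
lemma norm_pm_sq:
  fixes x w u :: "'a::euclidean_space"
  assumes "norm u = 1"
  shows "(norm (x + e *\<^sub>R u - w))^2 = (norm (x - w))^2 + 2 * e * inner u (x - w) + e^2"
    and "(norm (x - e *\<^sub>R u - w))^2 = (norm (x - w))^2 - 2 * e * inner u (x - w) + e^2"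
proof -
  have uu: "inner u u = 1" using assms by (simp add: power2_norm_eq_inner[symmetric])
  have "x + e *\<^sub>R u - w = (x - w) + e *\<^sub>R u" by simp
  then show "(norm (x + e *\<^sub>R u - w))^2 = (norm (x - w))^2 + 2 * e * inner u (x - w) + e^2"
    by (simp only: power2_norm_eq_inner inner_add_left inner_add_right inner_scaleR_left inner_scaleR_right uu)
       (simp add: inner_commute power2_eq_square algebra_simps)
  have "x - e *\<^sub>R u - w = (x - w) - e *\<^sub>R u" by simp
  then show "(norm (x - e *\<^sub>R u - w))^2 = (norm (x - w))^2 - 2 * e * inner u (x - w) + e^2"
    by (simp only: power2_norm_eq_inner inner_diff_left inner_diff_right inner_scaleR_left inner_scaleR_right uu)
       (simp add: inner_commute power2_eq_square algebra_simps)
qed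

lemma core:
  fixes W U :: "'a::euclidean_space set"
  assumes finW: "finite W" and neW: "W \<noteq> {}" and xW: "x \<notin> W" and finU: "finite U"
    and unit: "\<And>u. u \<in> U \<Longrightarrow> norm u = 1"
    and r: "r > 0"
    and inT: "\<And>e u. 0 < e \<Longrightarrow> e < r \<Longrightarrow> u \<in> U \<Longrightarrow> x + e *\<^sub>R u \<in> T \<and> x - e *\<^sub>R u \<in> T"
    and D: "0 < (\<Sum>w\<in>W. \<Sum>u\<in>U. (2 * (norm (x - w))^2 - 4 * (inner u (x - w))^2) / ((norm (x - w))^2)^2)"
  shows "\<exists>y\<in>T. logpot W x < logpot W y"
proof -
  define A where "A w = (norm (x - w))^2" for w
  define b where "b w u = inner u (x - w)" for w u
  have Apos: "A w > 0" if "w \<in> W" for w using xW that by (auto simp: A_def)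
  define L where "L s = (\<Sum>w\<in>W. \<Sum>u\<in>U. ln ((A w + s)^2 - 4 * s * (b w u)^2))" for s
  have hterm: "((\<lambda>s. ln ((A w + s)^2 - 4 * s * (b w u)^2)) has_real_derivative (2 * A w - 4 * (b w u)^2) / (A w)^2) (at 0)"
    if "w \<in> W" for w u
    using Apos[OF that]
    by (auto intro!: derivative_eq_intros simp: power2_eq_square field_simps)
  have "(L has_real_derivative (\<Sum>w\<in>W. \<Sum>u\<in>U. (2 * A w - 4 * (b w u)^2) / (A w)^2)) (at 0)"
    unfolding L_def by (intro DERIV_sum hterm)
  moreover have "(\<Sum>w\<in>W. \<Sum>u\<in>U. (2 * A w - 4 * (b w u)^2) / (A w)^2) > 0"
    using D by (simp add: A_def b_def)
  ultimately obtain d where d: "d > 0" and dL: "\<And>h. h > 0 \<Longrightarrow> h < d \<Longrightarrow> L 0 < L (0 + h)"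
    using DERIV_pos_inc_right by blast
  define m where "m = Min ((\<lambda>w. norm (x - w)) ` W)"
  have mpos: "m > 0" using finW neW xW by (auto simp: m_def)
  have mle: "m \<le> norm (x - w)" if "w \<in> W" for w using finW that by (auto simp: m_def)
  define e where "e = min (r/2) (min (m/2) (sqrt d / 2))"
  have e0: "e > 0" using r mpos d by (simp add: e_def)
  have sd: "sqrt d > 0" using d by simp
  have er: "e < r" and em: "e < m" and ed: "e < sqrt d" using r mpos sd by (auto simp: e_def min_less_iff_disj)
  have ed2: "e^2 < d"
    using ed e0 by (metis less_eq_real_def power_strict_mono real_sqrt_pow2 d zero_less_numeral order_less_le)
  have Lineq: "L 0 < L (e^2)" using dL[of "e^2"] e0 ed2 by simp
  have pos: "norm (x + s *\<^sub>R u - w) > 0" if "w \<in> W" "u \<in> U" "\<bar>s\<bar> = e" for w u s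
  proof -
    have "norm (x - w) \<le> norm (x + s *\<^sub>R u - w) + norm (s *\<^sub>R u)"
      by (metis add_diff_cancel_left' add_diff_eq diff_add_eq norm_triangle_ineq4 diff_diff_eq2 norm_minus_commute)
    moreover have "norm (s *\<^sub>R u) = e" using unit[OF that(2)] that(3) by simp
    ultimately show ?thesis using mle[OF that(1)] em by linarith
  qed
  have split: "ln ((A w + e^2)^2 - 4 * e^2 * (b w u)^2) = ln ((norm (x + e *\<^sub>R u - w))^2) + ln ((norm (x - e *\<^sub>R u - w))^2)"
    if "w \<in> W" "u \<in> U" for w u
  proof -
    have "(A w + e^2)^2 - 4 * e^2 * (b w u)^2 = (norm (x + e *\<^sub>R u - w))^2 * (norm (x - e *\<^sub>R u - w))^2"
      unfolding norm_pm_sq[OF unit[OF that(2)]] A_def b_def by (simp add: power2_eq_square algebra_simps)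
    moreover have "norm (x + e *\<^sub>R u - w) > 0" using pos[OF that, of e] e0 by simp
    moreover have "norm (x - e *\<^sub>R u - w) > 0" using pos[OF that, of "-e"] e0 by simp
    ultimately show ?thesis by (simp add: ln_mult)
  qed
  have s1: "(\<Sum>w\<in>W. \<Sum>u\<in>U. g w u) = (\<Sum>u\<in>U. \<Sum>w\<in>W. g w u)" for g :: "'a \<Rightarrow> 'a \<Rightarrow> real"
    by (rule sum.swap)
  have "L (e^2) = (\<Sum>u\<in>U. Fpot W (x + e *\<^sub>R u) + Fpot W (x - e *\<^sub>R u))"
    unfolding L_def Fpot_def
    by (simp add: split sum.distrib cong: sum.cong) (simp add: s1)
  moreover have "L 0 = (\<Sum>u\<in>U. 2 * Fpot W x)"
  proof -
    have "L 0 = (\<Sum>w\<in>W. \<Sum>u\<in>U. 2 * ln (A w))"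
      unfolding L_def by (intro sum.cong refl) (simp add: ln_realpow Apos)
    also have "\<dots> = (\<Sum>u\<in>U. 2 * Fpot W x)"
      unfolding Fpot_def A_def by (subst sum.swap) (simp add: sum_distrib_left)
    finally show ?thesis .
  qed
  ultimately have "(\<Sum>u\<in>U. 2 * Fpot W x) < (\<Sum>u\<in>U. Fpot W (x + e *\<^sub>R u) + Fpot W (x - e *\<^sub>R u))"
    using Lineq by simp
  then obtain u where uU: "u \<in> U" and gt: "2 * Fpot W x < Fpot W (x + e *\<^sub>R u) + Fpot W (x - e *\<^sub>R u)"
    by (meson not_le sum_mono)
  have nW: "x + s *\<^sub>R u \<notin> W" if "\<bar>s\<bar> = e" for s
    using pos[OF _ uU that] by force
  have T: "x + e *\<^sub>R u \<in> T" "x - e *\<^sub>R u \<in> T" using inT[OF e0 er uU] by auto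
  show ?thesis
  proof (cases "Fpot W x < Fpot W (x + e *\<^sub>R u)")
    case True
    then show ?thesis using T nW[of e] e0 xW by (auto simp: logpot_notin intro!: bexI[of _ "x + e *\<^sub>R u"])
  next
    case False
    then have "Fpot W x < Fpot W (x - e *\<^sub>R u)" using gt by simp
    moreover have "x - e *\<^sub>R u \<notin> W" using nW[of "-e"] e0 by simp
    ultimately show ?thesis using T xW by (auto simp: logpot_notin intro!: bexI[of _ "x - e *\<^sub>R u"])
  qed
qed
lemma bessel:
  fixes U :: "'a::euclidean_space set"
  assumes finU: "finite U" and orth: "pairwise orthogonal U" and unit: "\<And>u. u\<in>U \<Longrightarrow> norm u = 1"
  shows "(\<Sum>u\<in>U. (inner u v)^2) \<le> (norm v)^2"
    and "(\<Sum>u\<in>U. (inner u v)^2) = (norm v)^2 \<Longrightarrow> v = (\<Sum>u\<in>U. inner u v *\<^sub>R u)"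
    and "v \<in> span U \<Longrightarrow> v = (\<Sum>u\<in>U. inner u v *\<^sub>R u)"
proof -
  define p where "p = (\<Sum>u\<in>U. inner u v *\<^sub>R u)"
  have uu: "inner u' u = (if u = u' then 1 else 0)" if "u' \<in> U" "u \<in> U" for u u'
  proof (cases "u = u'")
    case True then show ?thesis using unit[OF that(1)] by (simp add: power2_norm_eq_inner[symmetric])
  next
    case False then show ?thesis using orth that by (auto simp: pairwise_def orthogonal_def)
  qed
  have ip: "inner u' p = inner u' v" if "u' \<in> U" for u'
  proof -
    have "inner u' p = (\<Sum>u\<in>U. inner u v * inner u' u)"
      unfolding p_def by (simp add: inner_sum_right)
    also have "\<dots> = (\<Sum>u\<in>U. if u = u' then inner u v else 0)"
      by (intro sum.cong refl) (simp add: uu[OF that])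
    also have "\<dots> = inner u' v" using finU that by simp
    finally show ?thesis .
  qed
  have pp: "inner p p = (\<Sum>u\<in>U. (inner u v)^2)"
    by (subst (1) p_def) (simp add: inner_sum_left ip power2_eq_square)
  have vp: "inner v p = (\<Sum>u\<in>U. (inner u v)^2)"
    unfolding p_def by (simp add: inner_sum_right inner_commute power2_eq_square)
  have nvp: "(norm (v - p))^2 = (norm v)^2 - (\<Sum>u\<in>U. (inner u v)^2)"
    using vp pp inner_commute[of p v]
    by (simp add: power2_norm_eq_inner inner_diff_left inner_diff_right)
  show "(\<Sum>u\<in>U. (inner u v)^2) \<le> (norm v)^2"
    using nvp by (metis diff_ge_0_iff_ge zero_le_power2)
  show "(\<Sum>u\<in>U. (inner u v)^2) = (norm v)^2 \<Longrightarrow> v = (\<Sum>u\<in>U. inner u v *\<^sub>R u)"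
    using nvp by (simp add: p_def)
  assume vs: "v \<in> span U"
  have "p \<in> span U" unfolding p_def by (intro span_sum span_scale span_base)
  then have "v - p \<in> span U" using vs by (rule span_diff[rotated])
  moreover have "orthogonal (v - p) u" if "u \<in> U" for u
  proof -
    have "inner (v - p) u = inner v u - inner p u" by (rule inner_diff_left)
    moreover have "inner v u = inner u v" "inner p u = inner u p" by (rule inner_commute)+
    ultimately show ?thesis using ip[OF that] unfolding orthogonal_def by linarith
  qed
  ultimately have "orthogonal (v - p) (v - p)" by (metis orthogonal_to_span)
  then show "v = (\<Sum>u\<in>U. inner u v *\<^sub>R u)" by (simp add: orthogonal_self p_def)
qed

lemma local_max:
  fixes W S :: "'a::euclidean_space set"
  assumes finW: "finite W" and neW: "W \<noteq> {}" and xW: "x \<notin> W"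
    and S: "subspace S" and dS: "dim S \<ge> 2" and r: "r > 0"
    and inT: "\<And>v. v \<in> S \<Longrightarrow> norm v < r \<Longrightarrow> x + v \<in> T"
  shows "\<exists>y\<in>T. logpot W x < logpot W y"
proof -
  obtain U where US: "U \<subseteq> S" and orth: "pairwise orthogonal U" and unit: "\<And>u. u \<in> U \<Longrightarrow> norm u = 1"
    and ind: "independent U" and cU: "card U = dim S" and sU: "span U = S"
    using orthonormal_basis_subspace[OF S] by metis
  have finU: "finite U" using ind by (rule independent_imp_finite)
  have inT': "x + e *\<^sub>R u \<in> T \<and> x - e *\<^sub>R u \<in> T" if "0 < e" "e < r" "u \<in> U" for e u
  proof -
    have "u \<in> S" using US that(3) by auto
    then have "e *\<^sub>R u \<in> S" "(- e) *\<^sub>R u \<in> S" using S by (simp_all only: subspace_scale)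
    moreover have "norm (e *\<^sub>R u) < r" "norm ((- e) *\<^sub>R u) < r" using unit[OF that(3)] that by auto
    ultimately show ?thesis using inT by (metis add_uminus_conv_diff scaleR_minus_left)
  qed
  show ?thesis
  proof (cases "card U \<ge> 3 \<or> (\<exists>w\<in>W. w - x \<notin> S)")
    case True
    define A where "A w = (norm (x - w))^2" for w
    have Apos: "A w > 0" if "w \<in> W" for w using xW that by (auto simp: A_def)
    define B where "B w = (\<Sum>u\<in>U. (inner u (x - w))^2)" for w
    have BA: "B w \<le> A w" for w unfolding A_def B_def by (rule bessel(1)[OF finU orth unit])
    have eq: "(\<Sum>u\<in>U. (2 * (norm (x - w))^2 - 4 * (inner u (x - w))^2) / ((norm (x - w))^2)^2)
       = (2 * real (card U) * A w - 4 * B w) / (A w)^2" for w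
      unfolding A_def B_def by (simp add: sum_divide_distrib[symmetric] sum_subtractf sum_distrib_left)
    have k2: "real (card U) \<ge> 2" using dS cU by simp
    have nonneg: "(2 * real (card U) * A w - 4 * B w) / (A w)^2 \<ge> 0" if "w \<in> W" for w
    proof -
      have "2 * real (card U) * A w \<ge> 4 * A w" using k2 Apos[OF that] by simp
      then show ?thesis using BA[of w] by simp
    qed
    obtain w0 where w0: "w0 \<in> W" "(2 * real (card U) * A w0 - 4 * B w0) / (A w0)^2 > 0"
    proof (cases "card U \<ge> 3")
      case True
      obtain w0 where "w0 \<in> W" using neW by auto
      moreover have "2 * real (card U) * A w0 > 4 * A w0" using True Apos[OF \<open>w0 \<in> W\<close>] by simp
      ultimately have "2 * real (card U) * A w0 - 4 * B w0 > 0" using BA[of w0] by linarith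
      then show ?thesis using that \<open>w0 \<in> W\<close> Apos[OF \<open>w0 \<in> W\<close>] by simp
    next
      case False
      then obtain w0 where w0: "w0 \<in> W" "w0 - x \<notin> S" using \<open>card U \<ge> 3 \<or> _\<close> by auto
      have "x - w0 \<notin> S"
      proof
        assume "x - w0 \<in> S"
        then have "- (x - w0) \<in> S" using S by (rule subspace_neg[rotated])
        then show False using w0 by simp
      qed
      then have "B w0 \<noteq> A w0"
        using bessel(2)[OF finU orth unit, of "x - w0"] sU span_sum span_scale span_base
        unfolding A_def B_def
        by (metis (no_types, lifting) span_sum span_scale span_base)
      then have "B w0 < A w0" using BA[of w0] by simp
      then have "2 * real (card U) * A w0 > 4 * B w0"
      proof -
        have "A w0 * 2 \<le> A w0 * real (card U)" using k2 Apos[OF w0(1)] by (intro mult_left_mono) auto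
        then show ?thesis using \<open>B w0 < A w0\<close> by (simp add: algebra_simps)
      qed
      then have "2 * real (card U) * A w0 - 4 * B w0 > 0" by linarith
      then show ?thesis using that w0 Apos[OF w0(1)] by simp
    qed
    have "0 < (\<Sum>w\<in>W. \<Sum>u\<in>U. (2 * (norm (x - w))^2 - 4 * (inner u (x - w))^2) / ((norm (x - w))^2)^2)"
      unfolding eq using w0 nonneg finW by (intro sum_pos2) auto
    then show ?thesis using core[OF finW neW xW finU unit r inT'] by blast
  next
    case False
    then have c2: "card U = 2" and allS: "\<And>w. w \<in> W \<Longrightarrow> w - x \<in> S" using dS cU by auto
    then obtain u1 u2 where U: "U = {u1, u2}" and ne: "u1 \<noteq> u2" by (auto simp: card_2_iff)
    have u: "norm u1 = 1" "norm u2 = 1" "inner u1 u2 = 0"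
      using unit orth ne by (auto simp: U pairwise_def orthogonal_def)
    have dec: "w - x = inner u1 (w - x) *\<^sub>R u1 + inner u2 (w - x) *\<^sub>R u2" if "w \<in> W" for w
      using bessel(3)[OF finU orth unit, of "w - x"] allS[OF that] sU ne by (simp add: U)
    have inT2: "x + a *\<^sub>R u1 + b *\<^sub>R u2 \<in> T" if "a^2 + b^2 < r^2" for a b
    proof -
      have "a *\<^sub>R u1 + b *\<^sub>R u2 \<in> S" using US S by (auto simp: U intro!: subspace_add subspace_scale)
      moreover have "(norm (a *\<^sub>R u1 + b *\<^sub>R u2))^2 < r^2" using norm_two_sq[OF u] that by simp
      then have "norm (a *\<^sub>R u1 + b *\<^sub>R u2) < r" using r by (simp add: power_less_imp_less_base)
      ultimately show ?thesis using inT by (simp add: add.assoc)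
    qed
    show ?thesis by (rule planar[OF finW neW xW u dec r inT2])
  qed
qed

lemma max_notin:
  assumes "is_max_point (logpot W) T x" and "finite W" and "infinite T"
  shows "x \<notin> W"
proof
  assume xW: "x \<in> W"
  have "T \<subseteq> W"
  proof
    fix y assume "y \<in> T"
    then have "logpot W y \<le> logpot W x" using assms(1) by (auto simp: is_max_point_def)
    then show "y \<in> W" using xW by (auto simp: logpot_def split: if_splits)
  qed
  then show False using assms(2,3) finite_subset by blast
qed

lemma open_infinite: "open (S::'a::euclidean_space set) \<Longrightarrow> S \<noteq> {} \<Longrightarrow> infinite S"
  by (metis finite_imp_closed not_open_singleton finite_imp_not_open)

lemma partA:
  fixes W :: "'a::euclidean_space set"
  assumes finW: "finite W" and neW: "W \<noteq> {}" and xW: "x \<notin> W"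
    and FT: "F \<subseteq> T" and dF: "aff_dim F \<ge> 2" and xF: "x \<in> rel_interior F"
  shows "\<exists>y\<in>T. logpot W x < logpot W y"
proof -
  obtain e where e: "e > 0" "ball x e \<inter> affine hull F \<subseteq> F" and xF': "x \<in> F"
    using xF by (auto simp: mem_rel_interior_ball)
  define S where "S = span ((\<lambda>y. -x + y) ` (F - {x}))"
  have aff: "affine hull F = (\<lambda>y. x + y) ` S" unfolding S_def by (rule affine_hull_span2[OF xF'])
  have img: "(+) (-x) ` F = insert 0 ((\<lambda>y. -x + y) ` (F - {x}))" using xF' by auto
  have "aff_dim F = int (dim ((+) (- x) ` F))" by (rule aff_dim_eq_dim) (simp add: hull_inc xF')
  also have "dim ((+) (- x) ` F) = dim S"
    unfolding img S_def by (metis dim_span span_insert_0)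
  finally have dS: "dim S \<ge> 2" using dF by simp
  show ?thesis
  proof (rule local_max[OF finW neW xW _ dS e(1)])
    show "subspace S" unfolding S_def by (rule subspace_span)
    fix v assume "v \<in> S" "norm v < e"
    then have "x + v \<in> ball x e \<inter> affine hull F" by (auto simp: aff dist_norm)
    then show "x + v \<in> T" using e(2) FT by auto
  qed
qed

theorem theorem0p7:
  fixes W :: "'a::euclidean_space set"
  assumes dim: "DIM('a) \<ge> 2"
    and finW: "finite W" and neW: "W \<noteq> {}"
  shows
    "(\<forall>\<Omega>. bounded_domain \<Omega> \<and> (\<forall>w\<in>W. w \<notin> frontier \<Omega>) \<longrightarrow>
        (\<forall>x. is_max_point (logpot W) (closure \<Omega>) x \<longrightarrow> x \<in> frontier \<Omega>))
   \<and> (\<forall>\<Omega>. bounded_domain \<Omega> \<and> interior (convex hull W) \<noteq> {}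
          \<and> closure \<Omega> = convex hull W \<longrightarrow>
        (\<forall>x. is_max_point (logpot W) (closure \<Omega>) x \<longrightarrow>
           (\<forall>F. F face_of (closure \<Omega>) \<and> aff_dim F \<ge> 2 \<longrightarrow> x \<notin> rel_interior F)
         \<and> (\<exists>E. E face_of (closure \<Omega>) \<and> aff_dim E = 1 \<and> x \<in> E)))"
proof (rule conjI; intro allI impI)
  fix \<Omega> x
  assume H: "bounded_domain \<Omega> \<and> (\<forall>w\<in>W. w \<notin> frontier \<Omega>)"
    and M: "is_max_point (logpot W) (closure \<Omega>) x"
  show "x \<in> frontier \<Omega>"
  proof (rule ccontr)
    assume nf: "x \<notin> frontier \<Omega>"
    have op: "open \<Omega>" "\<Omega> \<noteq> {}" using H by (auto simp: bounded_domain_def)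
    have xO: "x \<in> \<Omega>" using M nf op by (auto simp: is_max_point_def frontier_def interior_open)
    have "infinite (closure \<Omega>)"
      using open_infinite[OF op] closure_subset finite_subset by blast
    then have xW: "x \<notin> W" using max_notin[OF M finW] by blast
    obtain r where r: "r > 0" "ball x r \<subseteq> \<Omega>" using op xO open_contains_ball by blast
    have "\<exists>y\<in>closure \<Omega>. logpot W x < logpot W y"
    proof (rule local_max[OF finW neW xW subspace_UNIV _ r(1)])
      show "2 \<le> dim (UNIV :: 'a set)" using dim by simp
      fix v :: 'a assume "norm v < r"
      then have "x + v \<in> ball x r" by (simp add: dist_norm)
      then show "x + v \<in> closure \<Omega>" using r(2) closure_subset by blast
    qed
    then show False using M by (auto simp: is_max_point_def not_less[symmetric])
  qed
next
  fix \<Omega> x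
  assume H: "bounded_domain \<Omega> \<and> interior (convex hull W) \<noteq> {} \<and> closure \<Omega> = convex hull W"
    and M: "is_max_point (logpot W) (closure \<Omega>) x"
  define P where "P = convex hull W"
  have PO: "closure \<Omega> = P" using H by (simp add: P_def)
  have polyP: "polytope P" unfolding P_def polytope_def using finW by (intro exI[of _ W]) simp
  have "interior P \<noteq> {}" using H by (simp add: P_def)
  then have "infinite (interior P)" by (rule open_infinite[OF open_interior])
  then have "infinite P" using interior_subset finite_subset by metis
  then have xW: "x \<notin> W" using max_notin[OF M finW] PO by simp
  have xP: "x \<in> P" using M PO by (simp add: is_max_point_def)
  have claimA: "x \<notin> rel_interior F" if "F face_of P" "aff_dim F \<ge> 2" for F
  proof
    assume "x \<in> rel_interior F"
    then have "\<exists>y\<in>P. logpot W x < logpot W y"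
      by (rule partA[OF finW neW xW face_of_imp_subset[OF that(1)] that(2)])
    then show False using M PO by (auto simp: is_max_point_def not_less[symmetric])
  qed
  have partI: "\<forall>F. F face_of (closure \<Omega>) \<and> aff_dim F \<ge> 2 \<longrightarrow> x \<notin> rel_interior F"
    using claimA PO by auto
  define FF where "FF = {F. F face_of P \<and> x \<in> F}"
  have finFF: "finite FF" unfolding FF_def
    by (rule finite_subset[OF _ finite_polytope_faces[OF polyP]]) auto
  have "P \<in> FF" unfolding FF_def using xP face_of_refl[OF polytope_imp_convex[OF polyP]] by simp
  then obtain F0 where "is_arg_min aff_dim (\<lambda>F. F \<in> FF) F0"
    using ex_is_arg_min_if_finite[OF finFF, of aff_dim] by blast
  then have F0: "F0 face_of P" "x \<in> F0" and minF: "\<And>G. G face_of P \<Longrightarrow> x \<in> G \<Longrightarrow> \<not> aff_dim G < aff_dim F0"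
    by (auto simp: is_arg_min_def FF_def)
  have polyF0: "polytope F0" using face_of_polytope_polytope[OF polyP F0(1)] .
  have xri: "x \<in> rel_interior F0"
  proof (rule ccontr)
    assume "x \<notin> rel_interior F0"
    then have "x \<in> rel_frontier F0" using F0(2) closure_subset by (auto simp: rel_frontier_def)
    then obtain G where G: "G facet_of F0" "x \<in> G"
      using rel_frontier_of_polyhedron[OF polytope_imp_polyhedron[OF polyF0]] by blast
    have "G face_of P" using face_of_trans[OF facet_of_imp_face_of[OF G(1)] F0(1)] .
    moreover have "aff_dim G < aff_dim F0" using G(1) by (simp add: facet_of_def)
    ultimately show False using minF G(2) by blast
  qed
  have "aff_dim F0 \<ge> 0" using F0(2) by (metis aff_dim_negative_iff empty_iff not_less)
  moreover have "aff_dim F0 \<noteq> 0"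
  proof
    assume "aff_dim F0 = 0"
    then obtain a where "F0 = {a}" by (auto simp: aff_dim_eq_0)
    then have "F0 = {x}" using F0(2) by simp
    then have "x extreme_point_of P" using F0(1) face_of_singleton by metis
    then have "x \<in> W" unfolding P_def by (rule extreme_point_of_convex_hull)
    then show False using xW by simp
  qed
  moreover have "\<not> aff_dim F0 \<ge> 2" using claimA[OF F0(1)] xri by blast
  ultimately have "aff_dim F0 = 1" by simp
  then have "\<exists>E. E face_of (closure \<Omega>) \<and> aff_dim E = 1 \<and> x \<in> E" using F0 PO by blast
  with partI show "(\<forall>F. F face_of (closure \<Omega>) \<and> aff_dim F \<ge> 2 \<longrightarrow> x \<notin> rel_interior F)
         \<and> (\<exists>E. E face_of (closure \<Omega>) \<and> aff_dim E = 1 \<and> x \<in> E)" by (rule conjI)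
qed
end
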